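(* Let $u\in\mathcal{B}^N$, $m\in\mathbb{R}$, $(r,\sigma)\in F(N,A,u,m)$, and let $\mu$ be a minimum weight perfect matching in $\mathcal{F}^u_\kappa(r)$. Then there is $\varepsilon>0$ such that for each $\delta\in(0,\varepsilon]$ there is $(r^\delta,\mu)\in F(N,A,u,m+\delta)$ with $r^\delta_a>r_a$ for each $a\in A$.
   Context: Fix a finite set $\{\rho_1,\dots,\rho_k\}\subseteq\mathbb{R}_+$ with $\rho_1=0$. $N=\{1,\dots,n\}$ agents, $A$ a set of $n$ rooms. $\mathcal{B}$ is the set of utility functions $u_i(r_a,a)=v^i_a-r_a-\rho_i\max\{0,r_a-b_i\}$ with $v^i\in\mathbb{R}^A$, $b_i\ge0$, $\rho_i\in\{\rho_1,\dots,\rho_k\}$. An allocation for $(N,A,u,m)$ is $(r,\sigma)$ with $\sigma:N\to A$ a bijection, $r\in\mathbb{R}^A$, $\sum_ar_a=m$; envy-free means $u_i(r_{\sigma(i)},\sigma(i))\ge u_i(r_{\sigma(j)},\sigma(j))$ for all $i,j$; $F(N,A,u,m)$ is the set of envy-free allocations. $\kappa_{ia}(u,r)$ is the absolute value of agent $i$'s marginal disutility of an increase of the rent of room $a$ at $r$, i.e. $\kappa_{ia}(u,r)=1+\rho_i$ if $r_a\ge b_i$ and $1$ otherwise. For $r$ with some envy-free $(r,\sigma)$, $\mathcal{F}(r)$ is the bipartite graph on $N\cup A$ with edge $(i,a)$ iff $u_i(r_{\sigma(i)},\sigma(i))=u_i(r_a,a)$, and $\mathcal{F}^u_\kappa(r)$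 is this graph with weights $w(i,a)=\log\kappa_{ia}(u,r)$; a minimum weight perfect matching is a bijection $\mu:N\to A$ using only edges of $\mathcal{F}(r)$ minimizing $\sum_iw(i,\mu(i))$ among such. *)

theory Defs
  imports "HOL-Analysis.Analysis"
begin

text \<open>Utility in class B: u_i(x,a) = v i a - x - rho i * max 0 (x - b i).
  Agents of type 'i, rooms of type 'a; a profile is given by (v, b, rho).\<close>

definition util :: "('i \<Rightarrow> 'a \<Rightarrow> real) \<Rightarrow> ('i \<Rightarrow> real) \<Rightarrow> ('i \<Rightarrow> real) \<Rightarrow> 'i \<Rightarrow> real \<Rightarrow> 'a \<Rightarrow> real" where
  "util v b rho i x a = v i a - x - rho i * max 0 (x - b i)"

definition in_B :: "real set \<Rightarrow> 'i set \<Rightarrow> ('i \<Rightarrow> real) \<Rightarrow> ('i \<Rightarrow> real) \<Rightarrow> bool" where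
  "in_B Rhos N b rho \<longleftrightarrow> (\<forall>i\<in>N. b i \<ge> 0 \<and> rho i \<in> Rhos)"

definition allocation :: "'i set \<Rightarrow> 'a set \<Rightarrow> real \<Rightarrow> ('a \<Rightarrow> real) \<Rightarrow> ('i \<Rightarrow> 'a) \<Rightarrow> bool" where
  "allocation N A m r \<sigma> \<longleftrightarrow> bij_betw \<sigma> N A \<and> (\<Sum>a\<in>A. r a) = m"

definition envy_free :: "('i \<Rightarrow> 'a \<Rightarrow> real) \<Rightarrow> ('i \<Rightarrow> real) \<Rightarrow> ('i \<Rightarrow> real) \<Rightarrow>
    'i set \<Rightarrow> 'a set \<Rightarrow> real \<Rightarrow> ('a \<Rightarrow> real) \<Rightarrow> ('i \<Rightarrow> 'a) \<Rightarrow> bool" where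
  "envy_free v b rho N A m r \<sigma> \<longleftrightarrow> allocation N A m r \<sigma> \<and>
     (\<forall>i\<in>N. \<forall>j\<in>N. util v b rho i (r (\<sigma> i)) (\<sigma> i) \<ge> util v b rho i (r (\<sigma> j)) (\<sigma> j))"

text \<open>kappa_{ia}(u,r): absolute marginal disutility of raising the rent of room a.\<close>
definition kappa :: "('i \<Rightarrow> real) \<Rightarrow> ('i \<Rightarrow> real) \<Rightarrow> 'i \<Rightarrow> 'a \<Rightarrow> ('a \<Rightarrow> real) \<Rightarrow> real" where
  "kappa b rho i a r = (if r a \<ge> b i then 1 + rho i else 1)"

definition F_edge :: "('i \<Rightarrow> 'a \<Rightarrow> real) \<Rightarrow> ('i \<Rightarrow> real) \<Rightarrow> ('i \<Rightarrow> real) \<Rightarrow>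
    ('a \<Rightarrow> real) \<Rightarrow> ('i \<Rightarrow> 'a) \<Rightarrow> 'i \<Rightarrow> 'a \<Rightarrow> bool" where
  "F_edge v b rho r \<sigma> i a \<longleftrightarrow> util v b rho i (r (\<sigma> i)) (\<sigma> i) = util v b rho i (r a) a"

definition perfect_matching_F :: "('i \<Rightarrow> 'a \<Rightarrow> real) \<Rightarrow> ('i \<Rightarrow> real) \<Rightarrow> ('i \<Rightarrow> real) \<Rightarrow>
    'i set \<Rightarrow> 'a set \<Rightarrow> ('a \<Rightarrow> real) \<Rightarrow> ('i \<Rightarrow> 'a) \<Rightarrow> ('i \<Rightarrow> 'a) \<Rightarrow> bool" where
  "perfect_matching_F v b rho N A r \<sigma> \<mu> \<longleftrightarrow>
     bij_betw \<mu> N A \<and> (\<forall>i\<in>N. F_edge v b rho r \<sigma> i (\<mu> i))"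

definition match_weight :: "('i \<Rightarrow> real) \<Rightarrow> ('i \<Rightarrow> real) \<Rightarrow> 'i set \<Rightarrow> ('a \<Rightarrow> real) \<Rightarrow> ('i \<Rightarrow> 'a) \<Rightarrow> real" where
  "match_weight b rho N r \<mu> = (\<Sum>i\<in>N. ln (kappa b rho i (\<mu> i) r))"

definition min_weight_pm :: "('i \<Rightarrow> 'a \<Rightarrow> real) \<Rightarrow> ('i \<Rightarrow> real) \<Rightarrow> ('i \<Rightarrow> real) \<Rightarrow>
    'i set \<Rightarrow> 'a set \<Rightarrow> ('a \<Rightarrow> real) \<Rightarrow> ('i \<Rightarrow> 'a) \<Rightarrow> ('i \<Rightarrow> 'a) \<Rightarrow> bool" where
  "min_weight_pm v b rho N A r \<sigma> \<mu> \<longleftrightarrow> perfect_matching_F v b rho N A r \<sigma> \<mu> \<and>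
     (\<forall>\<mu>'. perfect_matching_F v b rho N A r \<sigma> \<mu>' \<longrightarrow>
        match_weight b rho N r \<mu> \<le> match_weight b rho N r \<mu>')"

end

theory Submission
  imports Defs
begin


lemma L1:
  assumes "rho i \<ge> 0" "h \<ge> 0"
  shows "util v b rho i (r a + h) a \<le> util v b rho i (r a) a - kappa b rho i a r * h"
proof (cases "r a \<ge> b i")
  case True
  then show ?thesis using assms by (simp add: util_def kappa_def max_def algebra_simps)
next
  case False
  have "rho i * max 0 (r a + h - b i) \<ge> 0" using assms by simp
  then show ?thesis using False by (simp add: util_def kappa_def max_def)
qed

lemma L2:
  assumes "rho i \<ge> 0" "h \<ge> 0"
  shows "util v b rho i (x + h) a \<ge> util v b rho i x a - (1 + rho i) * h"
proof -
  have "max 0 (x + h - b i) \<le> max 0 (x - b i) + h" using assms by (simp add: max_def)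
  then have "rho i * max 0 (x + h - b i) \<le> rho i * (max 0 (x - b i) + h)"
    using assms by (intro mult_left_mono) auto
  then show ?thesis by (simp add: util_def algebra_simps)
qed

lemma L3:
  assumes "rho i \<ge> 0" "h \<ge> 0" "r a < b i \<Longrightarrow> h \<le> b i - r a"
  shows "util v b rho i (r a + h) a \<ge> util v b rho i (r a) a - kappa b rho i a r * h"
proof (cases "r a \<ge> b i")
  case True
  then show ?thesis using assms by (simp add: util_def kappa_def max_def algebra_simps)
next
  case False
  then have "max 0 (r a + h - b i) = 0" "max 0 (r a - b i) = 0" using assms by (auto simp: max_def)
  then show ?thesis using False by (simp add: util_def kappa_def)
qed



fun wk :: "('a \<Rightarrow> 'a \<Rightarrow> bool) \<Rightarrow> 'a list \<Rightarrow> bool" where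
  "wk E (x # y # zs) = (E x y \<and> wk E (y # zs))"
| "wk E _ = True"

fun wt :: "('a \<Rightarrow> 'a \<Rightarrow> real) \<Rightarrow> 'a list \<Rightarrow> real" where
  "wt W (x # y # zs) = W x y + wt W (y # zs)"
| "wt W _ = 0"

lemma wk_split: "wk E (xs @ y # ys) \<longleftrightarrow> wk E (xs @ [y]) \<and> wk E (y # ys)"
  by (induction xs rule: induct_list012) auto

lemma wt_split: "wt W (xs @ y # ys) = wt W (xs @ [y]) + wt W (y # ys)"
  by (induction xs rule: induct_list012) auto

lemma wk_snoc: "xs \<noteq> [] \<Longrightarrow> wk E xs \<Longrightarrow> E (last xs) y \<Longrightarrow> wk E (xs @ [y])"
  by (induction xs rule: induct_list012) auto

lemma wt_snoc: "xs \<noteq> [] \<Longrightarrow> wt W (xs @ [y]) = wt W xs + W (last xs) y"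
  by (induction xs rule: induct_list012) auto

lemma wt_lower:
  assumes "set xs \<subseteq> A" "\<forall>x\<in>A. \<forall>y\<in>A. \<bar>W x y\<bar> \<le> M"
  shows "wt W xs \<ge> - real (length xs) * M"
  using assms
proof (induction xs rule: induct_list012)
  case (3 x y zs)
  then have "\<bar>W x y\<bar> \<le> M" by auto
  then have h: "- M \<le> W x y" by arith
  have IH: "- real (length (y#zs)) * M \<le> wt W (y#zs)" using 3 by auto
  show ?case using IH h by (simp add: algebra_simps)
next
  case (2 x) then show ?case using order_trans[OF abs_ge_zero, of "W x x" M] by auto
qed auto

lemma closed_nonneg:
  assumes cyc: "\<And>cs. cs \<noteq> [] \<Longrightarrow> set cs \<subseteq> A \<Longrightarrow> distinct cs \<Longrightarrow> wk E (cs @ [hd cs])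
                  \<Longrightarrow> wt W (cs @ [hd cs]) \<ge> 0"
  shows "cs \<noteq> [] \<Longrightarrow> set cs \<subseteq> A \<Longrightarrow> wk E (cs @ [hd cs]) \<Longrightarrow> wt W (cs @ [hd cs]) \<ge> 0"
proof (induction "length cs" arbitrary: cs rule: less_induct)
  case less
  show ?case
  proof (cases "distinct cs")
    case True then show ?thesis using cyc less.prems by blast
  next
    case False
    then obtain as y bs cs' where cs: "cs = as @ [y] @ bs @ [y] @ cs'"
      using not_distinct_decomp by blast
    define h where "h = hd cs"
    have h2: "h = hd (as @ y # cs')" unfolding h_def cs by (cases as) auto
    have e: "cs @ [hd cs] = as @ y # (bs @ y # (cs' @ [h]))" unfolding cs h_def by simp
    have w0: "wk E (as @ y # (bs @ y # (cs' @ [h])))" by (subst e[symmetric]) (rule less.prems(3))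
    have w1a: "wk E (as @ [y])" "wk E (y # bs @ y # (cs' @ [h]))"
      using w0 wk_split[of E as y "bs @ y # (cs' @ [h])"] by blast+
    have w1b: "wk E ((y # bs) @ [y])" "wk E (y # (cs' @ [h]))"
      using w1a(2) wk_split[of E "y # bs" y "cs' @ [h]"] by auto
    have w1: "wk E (as @ [y])" "wk E (y # bs @ [y])" "wk E (y # cs' @ [h])"
      using w1a w1b by auto
    have t0: "wt W (as @ y # (bs @ y # (cs' @ [h]))) = wt W (as @ [y]) + wt W (y # bs @ y # (cs' @ [h]))"
      by (rule wt_split)
    have t1: "wt W (y # (bs @ y # (cs' @ [h]))) = wt W (y # bs @ [y]) + wt W (y # (cs' @ [h]))"
      using wt_split[of W "y # bs" y "cs' @ [h]"] by simp
    have t: "wt W (cs @ [hd cs]) = wt W (as @ [y]) + wt W (y # bs @ [y]) + wt W (y # cs' @ [h])"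
      by (subst e) (use t0 t1 in linarith)
    have sA: "set (y # bs) \<subseteq> A" "set (as @ y # cs') \<subseteq> A" using less.prems(2) unfolding cs by auto
    have A1: "wt W ((y # bs) @ [hd (y # bs)]) \<ge> 0"
      by (rule less.hyps) (use w1 sA in \<open>simp_all add: cs\<close>)
    have wk2: "wk E ((as @ y # cs') @ [hd (as @ y # cs')])"
      using wk_split[of E as y "cs' @ [h]"] w1 h2 by simp
    have A2: "wt W ((as @ y # cs') @ [hd (as @ y # cs')]) \<ge> 0"
      by (rule less.hyps) (use wk2 sA in \<open>simp_all add: cs\<close>)
    have "wt W ((as @ y # cs') @ [hd (as @ y # cs')]) = wt W (as @ [y]) + wt W (y # cs' @ [h])"
      using wt_split[of W as y "cs' @ [h]"] h2 by simp
    then show ?thesis using A1 A2 t by simp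
  qed
qed

lemma walk_lower:
  assumes cl: "\<And>cs. cs \<noteq> [] \<Longrightarrow> set cs \<subseteq> A \<Longrightarrow> wk E (cs @ [hd cs]) \<Longrightarrow> wt W (cs @ [hd cs]) \<ge> 0"
    and fin: "finite A" and M: "\<forall>x\<in>A. \<forall>y\<in>A. \<bar>W x y\<bar> \<le> M" and M0: "M \<ge> 0"
  shows "set xs \<subseteq> A \<Longrightarrow> wk E xs \<Longrightarrow> wt W xs \<ge> - real (card A) * M"
proof (induction "length xs" arbitrary: xs rule: less_induct)
  case less
  show ?case
  proof (cases "distinct xs")
    case True
    then have "length xs \<le> card A" using less.prems fin
      by (metis card_mono distinct_card)
    then have "real (length xs) * M \<le> real (card A) * M"
      using M0 by (intro mult_right_mono) auto
    then have "- real (card A) * M \<le> - real (length xs) * M" by simp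
    then show ?thesis using wt_lower[OF less.prems(1) M] by linarith
  next
    case False
    then obtain as y bs cs' where xs: "xs = as @ [y] @ bs @ [y] @ cs'"
      using not_distinct_decomp by blast
    have e: "xs = as @ y # (bs @ y # cs')" unfolding xs by simp
    have w0: "wk E (as @ y # (bs @ y # cs'))" by (subst e[symmetric]) (rule less.prems(2))
    have w1a: "wk E (as @ [y])" "wk E (y # bs @ y # cs')"
      using w0 wk_split[of E as y "bs @ y # cs'"] by blast+
    have w1b: "wk E ((y # bs) @ [y])" "wk E (y # cs')"
      using w1a(2) wk_split[of E "y # bs" y "cs'"] by auto
    have w1: "wk E (as @ [y])" "wk E (y # bs @ [y])" "wk E (y # cs')"
      using w1a w1b by auto
    have t0: "wt W (as @ y # (bs @ y # cs')) = wt W (as @ [y]) + wt W (y # bs @ y # cs')"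
      by (rule wt_split)
    have t1: "wt W (y # (bs @ y # cs')) = wt W (y # bs @ [y]) + wt W (y # cs')"
      using wt_split[of W "y # bs" y "cs'"] by simp
    have t: "wt W xs = wt W (as @ [y]) + wt W (y # bs @ [y]) + wt W (y # cs')"
      by (subst e) (use t0 t1 in linarith)
    have sA: "set (y # bs) \<subseteq> A" "set (as @ y # cs') \<subseteq> A" using less.prems(1) unfolding xs by auto
    have A1: "wt W ((y # bs) @ [hd (y # bs)]) \<ge> 0"
      by (rule cl) (use w1 sA in simp_all)
    have wk2: "wk E (as @ y # cs')"
      using wk_split[of E as y "cs'"] w1 by simp
    have A2: "wt W (as @ y # cs') \<ge> - real (card A) * M"
      by (rule less.hyps) (use wk2 sA in \<open>simp_all add: xs\<close>)
    have "wt W (as @ y # cs') = wt W (as @ [y]) + wt W (y # cs')"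
      using wt_split[of W as y cs'] by simp
    then show ?thesis using A1 A2 t by simp
  qed
qed

lemma potentials:
  assumes cyc: "\<And>cs. cs \<noteq> [] \<Longrightarrow> set cs \<subseteq> A \<Longrightarrow> distinct cs \<Longrightarrow> wk E (cs @ [hd cs])
                  \<Longrightarrow> wt W (cs @ [hd cs]) \<ge> 0"
    and fin: "finite A"
  shows "\<exists>p. \<forall>x\<in>A. \<forall>y\<in>A. E x y \<longrightarrow> p y \<le> p x + W x y"
proof -
  define M where "M = (\<Sum>z\<in>A \<times> A. \<bar>W (fst z) (snd z)\<bar>)"
  have M: "\<forall>x\<in>A. \<forall>y\<in>A. \<bar>W x y\<bar> \<le> M"
  proof (intro ballI)
    fix x y assume "x \<in> A" "y \<in> A"
    then show "\<bar>W x y\<bar> \<le> M" unfolding M_def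
      using member_le_sum[of "(x,y)" "A \<times> A" "\<lambda>z. \<bar>W (fst z) (snd z)\<bar>"] fin by auto
  qed
  have M0: "M \<ge> 0" unfolding M_def by (rule sum_nonneg) auto
  have cl: "wt W (cs @ [hd cs]) \<ge> 0" if "cs \<noteq> []" "set cs \<subseteq> A" "wk E (cs @ [hd cs])" for cs
    by (rule closed_nonneg[of A E W cs, OF cyc that])
  have low: "- real (card A) * M \<le> wt W xs" if "set xs \<subseteq> A" "wk E xs" for xs
    by (rule walk_lower[of A E W M xs, OF cl fin M M0 that])
  define S where "S y = {wt W xs | xs. xs \<noteq> [] \<and> set xs \<subseteq> A \<and> wk E xs \<and> last xs = y}" for y
  define p where "p y = Inf (S y)" for y
  have bdd: "bdd_below (S y)" for y
  proof (rule bdd_belowI)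
    fix t assume "t \<in> S y"
    then obtain xs where xs: "set xs \<subseteq> A" "wk E xs" "t = wt W xs" unfolding S_def by blast
    show "- real (card A) * M \<le> t" using low[OF xs(1,2)] xs(3) by simp
  qed
  have ne: "S y \<noteq> {}" if "y \<in> A" for y
  proof -
    have "wt W [y] \<in> S y" unfolding S_def using that by (intro CollectI exI[of _ "[y]"]) auto
    then show ?thesis by blast
  qed
  show ?thesis
  proof (intro exI ballI impI)
    fix x y assume xy: "x \<in> A" "y \<in> A" "E x y"
    have "p y - W x y \<le> p x" unfolding p_def
    proof (rule cInf_greatest[OF ne[OF xy(1)]])
      fix t assume "t \<in> S x"
      then obtain xs where xs: "xs \<noteq> []" "set xs \<subseteq> A" "wk E xs" "last xs = x" "t = wt W xs"
        unfolding S_def by blast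
      have "wt W (xs @ [y]) \<in> S y" unfolding S_def
        using xs xy wk_snoc[of xs E y] by (intro CollectI exI[of _ "xs @ [y]"]) auto
      then have "Inf (S y) \<le> wt W (xs @ [y])" by (rule cInf_lower[OF _ bdd])
      then show "Inf (S y) - W x y \<le> t" using wt_snoc[OF xs(1), of W y] xs(4,5) by simp
    qed
    then show "p y \<le> p x + W x y" by simp
  qed
qed



lemma wk_nth: "wk E xs \<Longrightarrow> Suc j < length xs \<Longrightarrow> E (xs ! j) (xs ! Suc j)"
proof (induction xs arbitrary: j rule: induct_list012)
  case (3 x y zs)
  then show ?case by (cases j) auto
qed auto

lemma wt_sum: "wt W xs = (\<Sum>j<length xs - 1. W (xs ! j) (xs ! Suc j))"
proof (induction xs rule: induct_list012)
  case (3 x y zs)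
  have "(\<Sum>j<length (x # y # zs) - 1. W ((x # y # zs) ! j) ((x # y # zs) ! Suc j))
     = (\<Sum>j<Suc (length (y # zs) - 1). W ((x # y # zs) ! j) ((x # y # zs) ! Suc j))" by simp
  also have "\<dots> = W x y + (\<Sum>j<length (y # zs) - 1. W ((y # zs) ! j) ((y # zs) ! Suc j))"
    by (subst sum.lessThan_Suc_shift) simp
  finally show ?case using 3 by simp
qed auto

lemma mod_facts:
  fixes k j :: nat assumes "j < k"
  shows "(Suc j mod k + k - 1) mod k = j" "Suc ((j + k - 1) mod k) mod k = j"
    "Suc j mod k < k" "(j + k - 1) mod k < k"
proof -
  show "Suc j mod k < k" "(j + k - 1) mod k < k" using assms by auto
  show "(Suc j mod k + k - 1) mod k = j"
  proof (cases "Suc j < k")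
    case True then show ?thesis by (simp add: mod_add_self2)
  next
    case False then have "Suc j = k" using assms by simp
    then show ?thesis by simp
  qed
  show "Suc ((j + k - 1) mod k) mod k = j"
  proof (cases j)
    case 0
    then have "(j + k - 1) mod k = k - 1" using assms by simp
    moreover have "Suc (k - 1) = k" using assms by simp
    ultimately show ?thesis using 0 by simp
  next
    case (Suc j')
    then have "j + k - 1 = j' + k" by simp
    moreover have "(j' + k) mod k = j'" using assms Suc by simp
    ultimately have "(j + k - 1) mod k = j'" by simp
    then show ?thesis using assms Suc by simp
  qed
qed

lemma cycle_rotation:
  fixes \<mu> :: "'i \<Rightarrow> 'a" and Fe :: "'i \<Rightarrow> 'a \<Rightarrow> bool" and K :: "'i \<Rightarrow> 'a \<Rightarrow> real"
  assumes bij: "bij_betw \<mu> N A" and finN: "finite N"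
    and pm: "\<forall>i\<in>N. Fe i (\<mu> i)"
    and minw: "\<And>\<mu>'. bij_betw \<mu>' N A \<Longrightarrow> (\<forall>i\<in>N. Fe i (\<mu>' i)) \<Longrightarrow>
                 (\<Sum>i\<in>N. K i (\<mu> i)) \<le> (\<Sum>i\<in>N. K i (\<mu>' i))"
    and cs: "cs \<noteq> []" "set cs \<subseteq> A" "distinct cs"
    and wkc: "wk (\<lambda>x y. Fe (inv_into N \<mu> y) x) (cs @ [hd cs])"
  shows "wt (\<lambda>x y. K (inv_into N \<mu> y) x - K (inv_into N \<mu> y) y) (cs @ [hd cs]) \<ge> 0"
proof -
  define ag where "ag = inv_into N \<mu>"
  define E where "E x y = Fe (ag y) x" for x y
  define W where "W x y = K (ag y) x - K (ag y) y" for x y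
  define k where "k = length cs"
  define c where "c j = cs ! j" for j
  define nx where "nx j = Suc j mod k" for j
  define pre where "pre j = (j + k - 1) mod k" for j
  have k0: "k > 0" using cs k_def by simp
  have finA: "finite A" using bij finN bij_betw_finite by blast
  have agmu: "ag (\<mu> i) = i" if "i \<in> N" for i
    unfolding ag_def by (rule bij_betw_inv_into_left[OF bij that])
  have muag: "\<mu> (ag x) = x" "ag x \<in> N" if "x \<in> A" for x
  proof -
    show "\<mu> (ag x) = x" unfolding ag_def by (rule bij_betw_inv_into_right[OF bij that])
    have "x \<in> \<mu> ` N" using bij_betw_imp_surj_on[OF bij] that by simp
    then show "ag x \<in> N" unfolding ag_def by (rule inv_into_into)
  qed
  have mf: "pre (nx j) = j" "nx (pre j) = j" "nx j < k" "pre j < k" if "j < k" for j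
    unfolding pre_def nx_def using mod_facts[OF that] by auto
  have cinj: "c i = c j \<longleftrightarrow> i = j" if "i < k" "j < k" for i j
    unfolding c_def k_def using cs(3) that k_def nth_eq_iff_index_eq by auto
  have cset: "c j \<in> set cs" if "j < k" for j unfolding c_def k_def using that k_def by simp
  have csetE: "\<exists>j<k. x = c j" if "x \<in> set cs" for x
    using that unfolding c_def k_def by (metis in_set_conv_nth)
  have edges: "E (c j) (c (nx j))" if "j < k" for j
  proof -
    have "Suc j < length (cs @ [hd cs])" using that k_def by simp
    from wk_nth[OF wkc[folded ag_def] this]
    have "Fe (ag ((cs @ [hd cs]) ! Suc j)) ((cs @ [hd cs]) ! j)" .
    moreover have "(cs @ [hd cs]) ! j = c j" using that unfolding c_def k_def by (simp add: nth_append)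
    moreover have "(cs @ [hd cs]) ! Suc j = c (nx j)"
    proof (cases "Suc j < k")
      case True then show ?thesis unfolding c_def nx_def k_def by (simp add: nth_append)
    next
      case False then have "Suc j = k" using that by simp
      then show ?thesis unfolding c_def nx_def k_def using cs(1) by (simp add: nth_append hd_conv_nth)
    qed
    ultimately show ?thesis unfolding E_def by simp
  qed
  have wtsum: "wt W (cs @ [hd cs]) = (\<Sum>j<k. W (c j) (c (nx j)))"
  proof -
    have "wt W (cs @ [hd cs]) = (\<Sum>j<k. W ((cs @ [hd cs]) ! j) ((cs @ [hd cs]) ! Suc j))"
      unfolding wt_sum k_def by simp
    also have "\<dots> = (\<Sum>j<k. W (c j) (c (nx j)))"
    proof (rule sum.cong[OF refl])
      fix j assume "j \<in> {..<k}"
      then have j: "j < k" by simp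
      have "(cs @ [hd cs]) ! j = c j" using j unfolding c_def k_def by (simp add: nth_append)
      moreover have "(cs @ [hd cs]) ! Suc j = c (nx j)"
      proof (cases "Suc j < k")
        case True then show ?thesis unfolding c_def nx_def k_def by (simp add: nth_append)
      next
        case False then have "Suc j = k" using j by simp
        then show ?thesis unfolding c_def nx_def k_def using cs(1) by (simp add: nth_append hd_conv_nth)
      qed
      ultimately show "W ((cs @ [hd cs]) ! j) ((cs @ [hd cs]) ! Suc j) = W (c j) (c (nx j))" by simp
    qed
    finally show ?thesis .
  qed
  define ix where "ix x = (THE j. j < k \<and> c j = x)" for x
  have ixc: "ix (c j) = j" if "j < k" for j
    unfolding ix_def using that cinj by (intro the_equality) auto
  define \<pi> where "\<pi> x = (if x \<in> set cs then c (pre (ix x)) else x)" for x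
  have pic: "\<pi> (c j) = c (pre j)" if "j < k" for j
    unfolding \<pi>_def using ixc[OF that] cset[OF that] by simp
  have pinx: "\<pi> (c (nx j)) = c j" if "j < k" for j
    using pic[OF mf(3)[OF that]] mf(1)[OF that] by simp
  have piA: "\<pi> ` A \<subseteq> A"
  proof
    fix y assume "y \<in> \<pi> ` A"
    then obtain x where x: "x \<in> A" "y = \<pi> x" by blast
    show "y \<in> A"
    proof (cases "x \<in> set cs")
      case True
      then obtain j where "j < k" "x = c j" using csetE by blast
      then show ?thesis using x pic mf(4) cset cs(2) by auto
    next
      case False then show ?thesis using x \<pi>_def by simp
    qed
  qed
  have piin: "\<pi> x \<in> set cs" if "x \<in> set cs" for x
    using that csetE pic mf(4) cset by fastforce
  have piinj: "inj_on \<pi> A"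
  proof (rule inj_onI)
    fix x y assume xy: "x \<in> A" "y \<in> A" "\<pi> x = \<pi> y"
    show "x = y"
    proof (cases "x \<in> set cs")
      case True note xin = True
      show ?thesis
      proof (cases "y \<in> set cs")
        case True
        obtain i where i: "i < k" "x = c i" using csetE xin by blast
        obtain j where j: "j < k" "y = c j" using csetE True by blast
        have "c (pre i) = c (pre j)" using xy(3) pic i j by simp
        then have "pre i = pre j" using cinj mf(4) i j by blast
        then have "nx (pre i) = nx (pre j)" by simp
        then have "i = j" using mf(2) i j by simp
        then show ?thesis using i j by simp
      next
        case False
        then have "\<pi> y = y" unfolding \<pi>_def by simp
        then show ?thesis using piin[OF xin] xy(3) False by simp
      qed
    next
      case False note xout = False
      then have px: "\<pi> x = x" unfolding \<pi>_def by simp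
      show ?thesis
      proof (cases "y \<in> set cs")
        case True
        then show ?thesis using piin[OF True] xy(3) px xout by simp
      next
        case False
        then show ?thesis using xy(3) px unfolding \<pi>_def by simp
      qed
    qed
  qed
  have pibij: "bij_betw \<pi> A A"
    unfolding bij_betw_def using piinj endo_inj_surj[OF finA piA piinj] by simp
  define \<mu>' where "\<mu>' i = \<pi> (\<mu> i)" for i
  have bij': "bij_betw \<mu>' N A"
    unfolding \<mu>'_def using bij_betw_trans[OF bij pibij] by (simp add: comp_def)
  have pm': "\<forall>i\<in>N. Fe i (\<mu>' i)"
  proof
    fix i assume i: "i \<in> N"
    show "Fe i (\<mu>' i)"
    proof (cases "\<mu> i \<in> set cs")
      case True
      then obtain j' where j': "j' < k" "\<mu> i = c j'" using csetE by blast
      define j where "j = pre j'"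
      have j: "j < k" "nx j = j'" using mf j' unfolding j_def by auto
      have "E (c j) (c (nx j))" by (rule edges[OF j(1)])
      then have "Fe (ag (\<mu> i)) (c j)" unfolding E_def using j j' by simp
      moreover have "\<mu>' i = c j" unfolding \<mu>'_def using j' j pinx by metis
      ultimately show ?thesis using agmu[OF i] by simp
    next
      case False then show ?thesis using pm i unfolding \<mu>'_def \<pi>_def by simp
    qed
  qed
  define g where "g x = K (ag x) (\<pi> x) - K (ag x) x" for x
  have "(\<Sum>i\<in>N. K i (\<mu>' i)) - (\<Sum>i\<in>N. K i (\<mu> i)) = (\<Sum>i\<in>N. K i (\<mu>' i) - K i (\<mu> i))"
    by (simp add: sum_subtractf)
  also have "\<dots> = (\<Sum>i\<in>N. g (\<mu> i))"
    using agmu by (intro sum.cong) (auto simp: g_def \<mu>'_def)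
  also have "\<dots> = (\<Sum>x\<in>A. g x)" by (rule sum.reindex_bij_betw[OF bij])
  also have "\<dots> = (\<Sum>x\<in>set cs. g x)"
    by (rule sum.mono_neutral_right[OF finA cs(2)]) (auto simp: g_def \<pi>_def)
  also have "\<dots> = (\<Sum>j<k. g (c (nx j)))"
  proof (rule sum.reindex_bij_betw[symmetric])
    show "bij_betw (\<lambda>j. c (nx j)) {..<k} (set cs)"
    proof (rule bij_betw_imageI)
      show "inj_on (\<lambda>j. c (nx j)) {..<k}"
      proof (rule inj_onI)
        fix i j assume "i \<in> {..<k}" "j \<in> {..<k}" "c (nx i) = c (nx j)"
        then have "nx i = nx j" using cinj mf(3) by auto
        then have "pre (nx i) = pre (nx j)" by simp
        then show "i = j" using mf(1) \<open>i \<in> {..<k}\<close> \<open>j \<in> {..<k}\<close> by auto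
      qed
      show "(\<lambda>j. c (nx j)) ` {..<k} = set cs"
      proof
        show "(\<lambda>j. c (nx j)) ` {..<k} \<subseteq> set cs" using cset mf(3) by auto
        show "set cs \<subseteq> (\<lambda>j. c (nx j)) ` {..<k}"
        proof
          fix x assume "x \<in> set cs"
          then obtain i where i: "i < k" "x = c i" using csetE by blast
          then have "x = c (nx (pre i))" using mf(2) by simp
          then show "x \<in> (\<lambda>j. c (nx j)) ` {..<k}" using mf(4)[OF i(1)] by blast
        qed
      qed
    qed
  qed
  also have "\<dots> = (\<Sum>j<k. W (c j) (c (nx j)))"
    unfolding g_def W_def using pinx by (intro sum.cong) auto
  also have "\<dots> = wt W (cs @ [hd cs])" using wtsum by simp
  finally have "wt W (cs @ [hd cs]) = (\<Sum>i\<in>N. K i (\<mu>' i)) - (\<Sum>i\<in>N. K i (\<mu> i))" by simp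
  moreover have "(\<Sum>i\<in>N. K i (\<mu> i)) \<le> (\<Sum>i\<in>N. K i (\<mu>' i))" by (rule minw[OF bij' pm'])
  ultimately show ?thesis unfolding W_def ag_def by simp
qed



theorem lemma5:
  fixes Rhos :: "real set" and N :: "'i set" and A :: "'a set"
    and v :: "'i \<Rightarrow> 'a \<Rightarrow> real" and b rho :: "'i \<Rightarrow> real"
    and m :: real and r :: "'a \<Rightarrow> real" and \<sigma> \<mu> :: "'i \<Rightarrow> 'a"
  assumes "finite Rhos" and "0 \<in> Rhos" and "\<forall>x\<in>Rhos. x \<ge> 0"
    and "finite N" and "N \<noteq> {}" and "card A = card N"
    and "in_B Rhos N b rho"
    and "envy_free v b rho N A m r \<sigma>"
    and "min_weight_pm v b rho N A r \<sigma> \<mu>"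
  shows "\<exists>\<epsilon>>0. \<forall>\<delta>. 0 < \<delta> \<and> \<delta> \<le> \<epsilon> \<longrightarrow>
           (\<exists>r'. envy_free v b rho N A (m + \<delta>) r' \<mu> \<and> (\<forall>a\<in>A. r' a > r a))"
proof -
  note finN = assms(4)
  have bs: "bij_betw \<sigma> N A" and sumr: "(\<Sum>a\<in>A. r a) = m"
    and EF: "\<And>i j. i \<in> N \<Longrightarrow> j \<in> N \<Longrightarrow>
       util v b rho i (r (\<sigma> i)) (\<sigma> i) \<ge> util v b rho i (r (\<sigma> j)) (\<sigma> j)"
    using assms(8) unfolding envy_free_def allocation_def by auto
  define Fe where "Fe i a = F_edge v b rho r \<sigma> i a" for i a
  define K where "K i a = ln (kappa b rho i a r)" for i a
  have bm: "bij_betw \<mu> N A" and pm: "\<forall>i\<in>N. Fe i (\<mu> i)"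
    and minw0: "\<And>\<mu>'. perfect_matching_F v b rho N A r \<sigma> \<mu>' \<Longrightarrow>
        match_weight b rho N r \<mu> \<le> match_weight b rho N r \<mu>'"
    using assms(9) unfolding min_weight_pm_def perfect_matching_F_def Fe_def by auto
  have minw: "(\<Sum>i\<in>N. K i (\<mu> i)) \<le> (\<Sum>i\<in>N. K i (\<mu>' i))"
    if "bij_betw \<mu>' N A" "\<forall>i\<in>N. Fe i (\<mu>' i)" for \<mu>'
    using minw0[of \<mu>'] that unfolding perfect_matching_F_def match_weight_def K_def Fe_def by simp
  have rho0: "rho i \<ge> 0" if "i \<in> N" for i
    using assms(3,7) that unfolding in_B_def by auto
  have finA: "finite A" using bm finN bij_betw_finite by blast
  have Ane: "A \<noteq> {}" using bm assms(5) bij_betw_empty2 by blast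
  define ag where "ag = inv_into N \<mu>"
  have agmu: "ag (\<mu> i) = i" if "i \<in> N" for i
    unfolding ag_def by (rule bij_betw_inv_into_left[OF bm that])
  have "\<exists>p. \<forall>x\<in>A. \<forall>y\<in>A. (\<lambda>x y. Fe (ag y) x) x y \<longrightarrow>
          p y \<le> p x + (\<lambda>x y. K (ag y) x - K (ag y) y) x y"
  proof (rule potentials[OF _ finA])
    fix cs assume "cs \<noteq> []" "set cs \<subseteq> A" "distinct cs" "wk (\<lambda>x y. Fe (ag y) x) (cs @ [hd cs])"
    then show "0 \<le> wt (\<lambda>x y. K (ag y) x - K (ag y) y) (cs @ [hd cs])"
      unfolding ag_def using cycle_rotation[of \<mu> N A Fe K cs, OF bm finN pm minw] by blast
  qed
  then obtain p where p: "\<And>x y. x \<in> A \<Longrightarrow> y \<in> A \<Longrightarrow> Fe (ag y) x \<Longrightarrow> p y \<le> p x + (K (ag y) x - K (ag y) y)"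
    by blast
  define d where "d a = exp (p a)" for a
  have dpos: "d a > 0" for a unfolding d_def by simp
  have kpos: "kappa b rho i a r > 0" if "i \<in> N" for i a
    using rho0[OF that] unfolding kappa_def by auto
  have key: "kappa b rho i (\<mu> i) r * d (\<mu> i) \<le> kappa b rho i a r * d a"
    if i: "i \<in> N" and a: "a \<in> A" and e: "Fe i a" for i a
  proof -
    have mA: "\<mu> i \<in> A" using bm i bij_betwE by blast
    have "p (\<mu> i) \<le> p a + K i a - K i (\<mu> i)" using p[OF a mA] e agmu[OF i] by simp
    then have "exp (K i (\<mu> i) + p (\<mu> i)) \<le> exp (K i a + p a)" by simp
    then show ?thesis unfolding K_def d_def exp_add using kpos[OF i] by simp
  qed
  define D where "D = (\<Sum>a\<in>A. d a)"
  have Dpos: "D > 0" unfolding D_def using finA Ane dpos by (simp add: sum_pos)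
  define u where "u i x a = util v b rho i x a" for i x a
  define gap where "gap i a = u i (r (\<sigma> i)) (\<sigma> i) - u i (r a) a" for i a
  have gap0: "gap i a \<ge> 0" if "i \<in> N" "a \<in> A" for i a
  proof -
    have "a \<in> \<sigma> ` N" using bij_betw_imp_surj_on[OF bs] that(2) by simp
    then obtain j where "j \<in> N" "a = \<sigma> j" by blast
    then show ?thesis using EF[OF that(1)] unfolding gap_def u_def by simp
  qed
  have gappos: "gap i a > 0" if "i \<in> N" "a \<in> A" "\<not> Fe i a" for i a
    using gap0[OF that(1,2)] that(3) unfolding gap_def u_def Fe_def F_edge_def by simp
  define f where "f z = min (if gap (fst z) (snd z) > 0
        then gap (fst z) (snd z) / ((1 + rho (fst z)) * d (\<mu> (fst z))) else 1)
      (if r (\<mu> (fst z)) < b (fst z) then (b (fst z) - r (\<mu> (fst z))) / d (\<mu> (fst z)) else 1)" for z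
  have fpos: "f z > 0" if "z \<in> N \<times> A" for z
  proof -
    have "fst z \<in> N" using that by auto
    then have X: "(1 + rho (fst z)) * d (\<mu> (fst z)) > 0" using rho0 dpos by (simp add: add_pos_nonneg)
    have Y: "d (\<mu> (fst z)) > 0" by (rule dpos)
    show ?thesis unfolding f_def using X Y by simp
  qed
  define t0 where "t0 = Min (f ` (N \<times> A))"
  have fin2: "finite (f ` (N \<times> A))" using finN finA by simp
  have ne2: "f ` (N \<times> A) \<noteq> {}" using assms(5) Ane by simp
  have t0pos: "t0 > 0" unfolding t0_def using fpos fin2 ne2 by (subst Min_gr_iff) auto
  have t0le: "t0 \<le> f (i, a)" if "i \<in> N" "a \<in> A" for i a
    unfolding t0_def using fin2 that by (intro Min_le) auto
  show ?thesis
  proof (intro exI[of _ "t0 * D"] conjI allI impI)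
    show "t0 * D > 0" using t0pos Dpos by simp
    fix \<delta> assume \<delta>: "0 < \<delta> \<and> \<delta> \<le> t0 * D"
    define t where "t = \<delta> / D"
    have tpos: "t > 0" unfolding t_def using \<delta> Dpos by simp
    have tle: "t \<le> t0" unfolding t_def using \<delta> Dpos by (simp add: divide_le_eq mult.commute)
    define r' where "r' a = r a + t * d a" for a
    show "\<exists>r'. envy_free v b rho N A (m + \<delta>) r' \<mu> \<and> (\<forall>a\<in>A. r a < r' a)"
    proof (intro exI[of _ r'] conjI ballI)
      fix a show "r a < r' a" unfolding r'_def using tpos dpos by simp
    next
      have "(\<Sum>a\<in>A. r' a) = (\<Sum>a\<in>A. r a) + t * D"
        unfolding r'_def D_def by (simp add: sum.distrib sum_distrib_left)
      also have "\<dots> = m + \<delta>" using sumr Dpos unfolding t_def by simp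
      finally have sr': "(\<Sum>a\<in>A. r' a) = m + \<delta>" .
      show "envy_free v b rho N A (m + \<delta>) r' \<mu>"
        unfolding envy_free_def allocation_def
      proof (intro conjI ballI)
        show "bij_betw \<mu> N A" by (rule bm)
        show "(\<Sum>a\<in>A. r' a) = m + \<delta>" by (rule sr')
        fix i j assume i: "i \<in> N" and j: "j \<in> N"
        define c where "c = \<mu> i"
        define a where "a = \<mu> j"
        have cA: "c \<in> A" and aA: "a \<in> A" unfolding c_def a_def using bm i j bij_betwE by blast+
        have fe_c: "u i (r c) c = u i (r (\<sigma> i)) (\<sigma> i)"
          using pm i unfolding c_def u_def Fe_def F_edge_def by simp
        have tf: "t \<le> f (i, a)" using tle t0le[OF i aA] by simp
        have hc: "t * d c \<ge> 0" "t * d a \<ge> 0" using tpos dpos by (auto intro: less_imp_le)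
        have la: "u i (r' a) a \<le> u i (r a) a - kappa b rho i a r * (t * d a)"
          unfolding u_def r'_def by (rule L1[where rho=rho and i=i and h="t * d a" and v=v and b=b and r=r and a=a, OF rho0[OF i] hc(2)])
        have "u i (r' c) c \<ge> u i (r' a) a"
        proof (cases "Fe i a")
          case True
          have fea: "u i (r a) a = u i (r (\<sigma> i)) (\<sigma> i)"
            using True unfolding u_def Fe_def F_edge_def by simp
          have cond: "t * d c \<le> b i - r c" if "r c < b i"
          proof -
            have "t \<le> (b i - r c) / d c" using tf that unfolding f_def c_def by simp
            then show ?thesis using dpos[of c] by (simp add: le_divide_eq mult.commute)
          qed
          have lc: "u i (r' c) c \<ge> u i (r c) c - kappa b rho i c r * (t * d c)"
            unfolding u_def r'_def by (rule L3[where rho=rho and i=i and h="t * d c" and v=v and b=b and r=r and a=c, OF rho0[OF i] hc(1) cond])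
          have "kappa b rho i c r * d c \<le> kappa b rho i a r * d a"
            using key[OF i aA True] unfolding c_def .
          then have "kappa b rho i c r * (t * d c) \<le> kappa b rho i a r * (t * d a)"
            using tpos by (simp add: mult.left_commute[of _ t] )
          then show ?thesis using la lc fe_c fea by linarith
        next
          case False
          have g: "gap i a > 0" by (rule gappos[OF i aA False])
          have "t \<le> gap i a / ((1 + rho i) * d c)" using tf g unfolding f_def c_def by simp
          then have "t * ((1 + rho i) * d c) \<le> gap i a"
            using rho0[OF i] dpos[of c] by (simp add: le_divide_eq)
          moreover have "u i (r' c) c \<ge> u i (r c) c - (1 + rho i) * (t * d c)"
            unfolding u_def r'_def by (rule L2[where rho=rho and i=i and h="t * d c" and v=v and b=b and x="r c" and a=c, OF rho0[OF i] hc(1)])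
          moreover have "kappa b rho i a r * (t * d a) \<ge> 0"
            using kpos[OF i, of a] hc(2) by simp
          ultimately show ?thesis using la fe_c unfolding gap_def by (simp add: algebra_simps)
        qed
        then show "util v b rho i (r' (\<mu> j)) (\<mu> j) \<le> util v b rho i (r' (\<mu> i)) (\<mu> i)"
          unfolding u_def c_def a_def .
      qed
    qed
  qed
qed

end
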